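(* Let $G=(V,E)$ be an infinite graph satisfying the $CD\psi(n,-K)$ condition for some $n>0$, $K>0$, with $D_\mu<\infty$ and $D_w<\infty$, where $\psi:(0,+\infty)\to\mathbb R$ is a $C^1$ concave function with $\psi>0$ and $\psi'>0$ (and $\psi(1)D_w$ in the image of $\psi$). Let $u$ be a positive solution of the heat equation $\partial_t u=\Delta u$ on $V$. Then for all vertices and all $t>0$, $$\Gamma^{\psi}(u)-\psi'(1)\frac{\partial_{t}u}{u}\leq \frac{n}{2t}+\sqrt{nKC},\qquad C=D_{\mu}\left[\psi'(1)\left(\psi^{-1}(\psi(1)D_{w})-1\right)+\psi(1)\right].$$
   Context: Graphs: $G=(V,E)$ is a connected, locally finite graph; each edge $xy$ carries a weight $w_{xy}>0$ (possibly asymmetric), and $\mu:V\to(0,\infty)$ is a vertex measure; $y\sim x$ means $xy\in E$, $\deg(x)=\sum_{y\sim x}w_{xy}<\infty$, $D_\mu=\sup_{x}\deg(x)/\mu(x)$, $D_w=\sup_{x\sim y}\deg(x)/w_{xy}$. Laplacian: $\Delta f(x)=\frac{1}{\mu(x)}\sum_{y\sim x}w_{xy}(f(y)-f(x))$. For $\psi:(0,\infty)\to\mathbb R$ and $f:V\to(0,\infty)$: $\Delta^\psi f(x)=\Delta\big[\psi\big(\tfrac{f}{f(x)}\big)\big](x)$; for $C^1$ $\psi$, $\overline\psi(s)=\psi'(1)(s-1)-(\psi(s)-\psi(1))$ and $\Gamma^\psi f=\Delta^{\overline\psi}f$; $(\Omega^\psi f)(x)=\Delta\big[\psi'\big(\tfrac{f}{f(x)}\big)\tfrac{f}{f(x)}\big(\tfrac{\Delta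 f}{f}-\tfrac{\Delta f(x)}{f(x)}\big)\big](x)$; $2\Gamma_2^\psi(f)=\Omega^\psi f+\frac{\Delta f\,\Delta^\psi f}{f}-\frac{\Delta(f\Delta^\psi f)}{f}$. The graph satisfies $CD\psi(n,K)$ if for every $f:V\to(0,\infty)$ and every vertex, $\Gamma_2^\psi(f)\ge\frac1n(\Delta^\psi f)^2+K\Gamma^\psi(f)$. $\psi^{-1}$ is the inverse function of $\psi$. A positive solution of the heat equation on $U\subset V$ is $u:V\times[0,\infty)\to(0,\infty)$, continuously differentiable in $t$, with $\partial_t u=\Delta u$ at every $x\in U$, $t\ge0$; operators are applied to $u(\cdot,t)$ at each fixed time. *)

theory Defs
  imports "HOL-Analysis.Analysis"
begin

text \<open>Weighted graph: adjacency relation E (y \<sim> x iff E x y), weights w x y, vertex measure mu.\<close>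

definition nbrs :: "('v \<Rightarrow> 'v \<Rightarrow> bool) \<Rightarrow> 'v \<Rightarrow> 'v set" where
  "nbrs E x = {y. E x y}"

definition deg :: "('v \<Rightarrow> 'v \<Rightarrow> bool) \<Rightarrow> ('v \<Rightarrow> 'v \<Rightarrow> real) \<Rightarrow> 'v \<Rightarrow> real" where
  "deg E w x = (\<Sum>y\<in>nbrs E x. w x y)"

definition D_mu :: "('v \<Rightarrow> 'v \<Rightarrow> bool) \<Rightarrow> ('v \<Rightarrow> 'v \<Rightarrow> real) \<Rightarrow> ('v \<Rightarrow> real) \<Rightarrow> real" where
  "D_mu E w mu = Sup (range (\<lambda>x. deg E w x / mu x))"

definition D_w :: "('v \<Rightarrow> 'v \<Rightarrow> bool) \<Rightarrow> ('v \<Rightarrow> 'v \<Rightarrow> real) \<Rightarrow> real" where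
  "D_w E w = Sup {deg E w x / w x y | x y. E x y}"

definition weighted_graph :: "('v \<Rightarrow> 'v \<Rightarrow> bool) \<Rightarrow> ('v \<Rightarrow> 'v \<Rightarrow> real) \<Rightarrow> ('v \<Rightarrow> real) \<Rightarrow> bool" where
  "weighted_graph E w mu \<longleftrightarrow>
     (\<forall>x y. E x y \<longrightarrow> E y x) \<and> (\<forall>x. \<not> E x x) \<and>
     (\<forall>x y. E\<^sup>*\<^sup>* x y) \<and>
     (\<forall>x. finite (nbrs E x)) \<and>
     (\<forall>x y. E x y \<longrightarrow> w x y > 0) \<and>
     (\<forall>x. mu x > 0)"

definition lap :: "('v \<Rightarrow> 'v \<Rightarrow> bool) \<Rightarrow> ('v \<Rightarrow> 'v \<Rightarrow> real) \<Rightarrow> ('v \<Rightarrow> real)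
                   \<Rightarrow> ('v \<Rightarrow> real) \<Rightarrow> 'v \<Rightarrow> real" where
  "lap E w mu f x = (1 / mu x) * (\<Sum>y\<in>nbrs E x. w x y * (f y - f x))"

definition lap_psi :: "('v \<Rightarrow> 'v \<Rightarrow> bool) \<Rightarrow> ('v \<Rightarrow> 'v \<Rightarrow> real) \<Rightarrow> ('v \<Rightarrow> real)
                   \<Rightarrow> (real \<Rightarrow> real) \<Rightarrow> ('v \<Rightarrow> real) \<Rightarrow> 'v \<Rightarrow> real" where
  "lap_psi E w mu psi f x = lap E w mu (\<lambda>y. psi (f y / f x)) x"

definition psibar :: "(real \<Rightarrow> real) \<Rightarrow> real \<Rightarrow> real" where
  "psibar psi s = deriv psi 1 * (s - 1) - (psi s - psi 1)"

definition Gamma_psi :: "('v \<Rightarrow> 'v \<Rightarrow> bool) \<Rightarrow> ('v \<Rightarrow> 'v \<Rightarrow> real) \<Rightarrow> ('v \<Rightarrow> real)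
                   \<Rightarrow> (real \<Rightarrow> real) \<Rightarrow> ('v \<Rightarrow> real) \<Rightarrow> 'v \<Rightarrow> real" where
  "Gamma_psi E w mu psi f x = lap_psi E w mu (psibar psi) f x"

definition Omega_psi :: "('v \<Rightarrow> 'v \<Rightarrow> bool) \<Rightarrow> ('v \<Rightarrow> 'v \<Rightarrow> real) \<Rightarrow> ('v \<Rightarrow> real)
                   \<Rightarrow> (real \<Rightarrow> real) \<Rightarrow> ('v \<Rightarrow> real) \<Rightarrow> 'v \<Rightarrow> real" where
  "Omega_psi E w mu psi f x =
     lap E w mu (\<lambda>y. deriv psi (f y / f x) * (f y / f x) *
                      (lap E w mu f y / f y - lap E w mu f x / f x)) x"

definition Gamma2_psi :: "('v \<Rightarrow> 'v \<Rightarrow> bool) \<Rightarrow> ('v \<Rightarrow> 'v \<Rightarrow> real) \<Rightarrow> ('v \<Rightarrow> real)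
                   \<Rightarrow> (real \<Rightarrow> real) \<Rightarrow> ('v \<Rightarrow> real) \<Rightarrow> 'v \<Rightarrow> real" where
  "Gamma2_psi E w mu psi f x = (1/2) *
     (Omega_psi E w mu psi f x
      + lap E w mu f x * lap_psi E w mu psi f x / f x
      - lap E w mu (\<lambda>y. f y * lap_psi E w mu psi f y) x / f x)"

definition CD_psi :: "('v \<Rightarrow> 'v \<Rightarrow> bool) \<Rightarrow> ('v \<Rightarrow> 'v \<Rightarrow> real) \<Rightarrow> ('v \<Rightarrow> real)
                   \<Rightarrow> (real \<Rightarrow> real) \<Rightarrow> real \<Rightarrow> real \<Rightarrow> bool" where
  "CD_psi E w mu psi n K \<longleftrightarrow>
     (\<forall>f x. (\<forall>y. f y > 0) \<longrightarrow>
        Gamma2_psi E w mu psi f x \<ge> (1/n) * (lap_psi E w mu psi f x)\<^sup>2 + K * Gamma_psi E w mu psi f x)"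

definition heat_solution :: "('v \<Rightarrow> 'v \<Rightarrow> bool) \<Rightarrow> ('v \<Rightarrow> 'v \<Rightarrow> real) \<Rightarrow> ('v \<Rightarrow> real)
                   \<Rightarrow> ('v \<Rightarrow> real \<Rightarrow> real) \<Rightarrow> bool" where
  "heat_solution E w mu u \<longleftrightarrow>
     (\<forall>x t. t \<ge> 0 \<longrightarrow> u x t > 0) \<and>
     (\<forall>x. \<exists>u'. continuous_on {0..} u' \<and>
        (\<forall>t\<ge>0. (u x has_real_derivative u' t) (at t within {0..}) \<and>
                u' t = lap E w mu (\<lambda>y. u y t) x))"

end

theory Submission
  imports Defs
begin


lemma last_time:
  fixes h :: "real \<Rightarrow> real"
  assumes "p \<le> q" "continuous_on {p..q} h" "h p \<le> 0" "h q > 0"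
  shows "\<exists>s0. p \<le> s0 \<and> s0 < q \<and> h s0 \<le> 0 \<and> (\<forall>s. s0 < s \<and> s \<le> q \<longrightarrow> h s > 0)"
proof -
  define S where "S = {p..q} \<inter> h -` {..0}"
  have cl: "closed S" unfolding S_def
    by (rule continuous_closed_preimage) (use assms in auto)
  have pS: "p \<in> S" using assms unfolding S_def by auto
  have bdd: "bdd_above S" unfolding S_def by (rule bdd_aboveI[of _ q]) auto
  define s0 where "s0 = Sup S"
  have s0S: "s0 \<in> S" unfolding s0_def using closed_contains_Sup[OF _ bdd cl] pS by auto
  have "\<forall>s. s0 < s \<and> s \<le> q \<longrightarrow> h s > 0"
  proof (intro allI impI)
    fix s assume a: "s0 < s \<and> s \<le> q"
    show "h s > 0"
    proof (rule ccontr)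
      assume "\<not> h s > 0"
      hence "s \<in> S" using a s0S unfolding S_def by auto
      hence "s \<le> s0" unfolding s0_def using cSup_upper[OF _ bdd] by auto
      thus False using a by auto
    qed
  qed
  moreover have "s0 \<noteq> q" using s0S assms(4) unfolding S_def by auto
  ultimately show ?thesis using s0S unfolding S_def by (intro exI[of _ s0]) auto
qed

lemma upper_lip:
  fixes G :: "real \<Rightarrow> real"
  assumes der: "\<And>s. s > 0 \<Longrightarrow> (G has_real_derivative G' s) (at s)"
    and bd: "\<And>s. s > 0 \<Longrightarrow> G s \<ge> 0 \<Longrightarrow> G' s \<le> B"
    and "0 < t0" "t0 \<le> t" "0 \<le> A" "G t0 \<le> A" "0 \<le> B"
  shows "G t \<le> A + B * (t - t0)"
proof (rule ccontr)
  assume c: "\<not> ?thesis"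
  define H where "H s = G s - A - B * (s - t0)" for s
  have Hder: "\<And>s. s > 0 \<Longrightarrow> (H has_real_derivative G' s - B) (at s)"
    unfolding H_def using der by (auto intro!: derivative_eq_intros)
  have cont: "continuous_on {t0..t} H"
    using Hder assms(3) by (intro DERIV_atLeastAtMost_imp_continuous_on) (meson less_le_trans)
  obtain s0 where s0: "t0 \<le> s0" "s0 < t" "H s0 \<le> 0" "\<forall>s. s0 < s \<and> s \<le> t \<longrightarrow> H s > 0"
    using last_time[OF assms(4) cont] c assms(6) unfolding H_def by auto
  obtain z where z: "s0 < z" "z < t" "H t - H s0 = (t - s0) * (G' z - B)"
    using MVT2[OF s0(2), of H "\<lambda>s. G' s - B"] Hder s0(1) assms(3) by force
  have "H z > 0" using s0 z by auto
  hence "G z \<ge> 0" unfolding H_def using z s0 assms by (smt (verit) mult_nonneg_nonneg)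
  hence "G' z \<le> B" using bd z s0 assms(3) by auto
  hence "H t \<le> H s0" using z s0 by (smt (verit) mult_nonneg_nonpos)
  thus False using s0 c unfolding H_def by auto
qed



lemma abstract_delta:
  fixes F F' :: "'v \<Rightarrow> real \<Rightarrow> real"
  assumes der: "\<And>x t. t > 0 \<Longrightarrow> (F x has_real_derivative F' x t) (at t)"
    and bnd: "\<And>x t. t > 0 \<Longrightarrow> F x t \<le> Bz"
    and ineq: "\<And>x t Z. t > 0 \<Longrightarrow> F x t \<ge> 0 \<Longrightarrow> (\<And>y. F y t \<le> Z) \<Longrightarrow> F x t \<le> Z \<Longrightarrow>
                 F' x t \<le> - a * (F x t)^2 + b + L * (Z - F x t)"
    and a: "a > 0" and b: "b \<ge> 0" and L: "L \<ge> 0" and Bz: "Bz \<ge> 0" and \<delta>: "\<delta> > 0"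
  shows "\<forall>x t. t > 0 \<longrightarrow> F x t < 1/(a*t) + sqrt (b/a) + \<delta>"
proof (rule ccontr)
  assume contra: "\<not> ?thesis"
  define k where "k = sqrt (b/a)"
  have k0: "k \<ge> 0" unfolding k_def using a b by auto
  have ak: "a * k^2 = b" unfolding k_def using a b by simp
  define Y where "Y t = 1/(a*t) + k + \<delta>" for t
  define B where "B = b + L * Bz"
  have B: "B \<ge> 0" unfolding B_def using b L Bz by simp
  have derB: "F' x s \<le> B" if "s > 0" "F x s \<ge> 0" for x s
  proof -
    have "F' x s \<le> - a * (F x s)^2 + b + L * (Bz - F x s)"
      by (rule ineq) (use that bnd in auto)
    also have "\<dots> \<le> b + L * Bz"
    proof -
      have "0 \<le> a * (F x s)^2" using a by simp
      moreover have "0 \<le> L * F x s" using L that by simp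
      ultimately show ?thesis unfolding right_diff_distrib by linarith
    qed
    finally show ?thesis unfolding B_def .
  qed
  have ulip: "F x t \<le> A + B * (t - t0)" if "0 < t0" "t0 \<le> t" "0 \<le> A" "F x t0 \<le> A" for x t0 t A
    by (rule upper_lip[where G="F x" and G'="F' x"]) (use der derB that B in auto)
  define T where "T = {t. t > 0 \<and> (\<exists>x. F x t \<ge> Y t)}"
  define t1 where "t1 = 1/(a*(Bz+1))"
  have t1: "t1 > 0" unfolding t1_def using a Bz by simp
  have Tt1: "t > t1" if "t \<in> T" for t
  proof (rule ccontr)
    assume "\<not> t > t1"
    hence tt: "t \<le> t1" "t > 0" using that unfolding T_def by auto
    have "a * t \<le> a * t1" using tt a by simp
    also have "a * t1 = 1/(Bz+1)" unfolding t1_def using a Bz by simp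
    finally have at: "a * t \<le> 1/(Bz+1)" .
    have "1/(1/(Bz+1)) \<le> 1/(a*t)"
      by (rule divide_left_mono[OF at]) (use a tt Bz in auto)
    hence "1/(a*t) \<ge> Bz + 1" using Bz by simp
    hence "Y t > Bz" unfolding Y_def using k0 \<delta> by simp
    moreover obtain x where "F x t \<ge> Y t" using \<open>t \<in> T\<close> unfolding T_def by auto
    ultimately show False using bnd[OF tt(2), of x] by simp
  qed
  have Tne: "T \<noteq> {}"
  proof -
    obtain x0 t0 where "t0 > 0" "\<not> F x0 t0 < 1/(a*t0) + sqrt (b/a) + \<delta>" using contra by blast
    hence "t0 \<in> T" unfolding T_def Y_def k_def by (auto simp: not_less)
    thus ?thesis by blast
  qed
  have Tbdd: "bdd_below T" using Tt1 by (intro bdd_belowI[of _ t1]) (simp add: less_imp_le)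
  define ts where "ts = Inf T"
  have ts1: "ts \<ge> t1" unfolding ts_def using Tne Tt1 by (intro cInf_greatest) (auto intro: less_imp_le)
  hence ts0: "ts > 0" using t1 by simp
  have before: "F x s < Y s" if "0 < s" "s < ts" for x s
  proof (rule ccontr)
    assume "\<not> F x s < Y s"
    hence "s \<in> T" using that unfolding T_def by (force simp: not_less)
    hence "ts \<le> s" unfolding ts_def using Tbdd by (simp add: cInf_lower)
    thus False using that by simp
  qed
  have "1/(a*ts) > 0" using ts0 a by simp
  hence Yts: "Y ts > 0" unfolding Y_def using k0 \<delta> by linarith
  have near: "\<exists>x. F x ts > Y ts - \<eta>" if \<eta>: "0 < \<eta>" "\<eta> < Y ts" for \<eta>
  proof (rule ccontr)
    assume "\<not> ?thesis"
    hence all: "\<And>x. F x ts \<le> Y ts - \<eta>" by (simp add: not_less)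
    define c where "c = B + 1/(a*ts^2)"
    have c: "c > 0" unfolding c_def using B a ts0 by (simp add: add_nonneg_pos)
    define h where "h = \<eta> / (2*c)"
    have h: "h > 0" unfolding h_def using c \<eta> by simp
    have "ts < ts + h" using h by simp
    then obtain t where t: "t \<in> T" "t < ts + h" unfolding ts_def using Tne cInf_lessD by blast
    have tts: "ts \<le> t" unfolding ts_def using Tbdd t(1) by (simp add: cInf_lower)
    have F_le: "F x t \<le> Y ts - \<eta> + B * h" for x
    proof -
      have "F x t \<le> (Y ts - \<eta>) + B * (t - ts)" by (rule ulip) (use ts0 tts \<eta> all in auto)
      also have "\<dots> \<le> Y ts - \<eta> + B * h" using B t tts by (simp add: mult_left_mono)
      finally show ?thesis .
    qed
    have "1/(a*ts) - 1/(a*t) = (t - ts)/(a*t*ts)" using a ts0 tts by (simp add: field_simps)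
    also have "\<dots> \<le> (t - ts)/(a*ts^2)"
      using a ts0 tts by (intro divide_left_mono) (auto simp: power2_eq_square intro!: mult_right_mono mult_pos_pos)
    also have "\<dots> \<le> h/(a*ts^2)" using t tts a ts0 by (simp add: divide_right_mono)
    finally have Yt: "Y t \<ge> Y ts - h/(a*ts^2)" unfolding Y_def by simp
    have "h * c = \<eta>/2" unfolding h_def using c by simp
    hence "B*h + h/(a*ts^2) = \<eta>/2" unfolding c_def by (simp add: algebra_simps)
    hence e: "B*h + h/(a*ts^2) = \<eta>/2" .
    have lt: "F x t < Y t" for x using F_le[of x] Yt \<eta> e by linarith
    from t(1) obtain x' where "F x' t \<ge> Y t" unfolding T_def by auto
    with lt[of x'] show False by simp
  qed
  define g1 where "g1 = min (\<delta>/2) (a*\<delta>^2/(8*(L+1)))"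
  define m where "m = a*\<delta>^2/8"
  have g1: "g1 > 0" unfolding g1_def using a \<delta> L by simp
  have m: "m > 0" unfolding m_def using a \<delta> by simp
  define \<eta> where "\<eta> = min (g1/2) (min (m*ts/4) (Y ts/2))"
  have e1: "\<eta> \<le> g1/2" "\<eta> \<le> m*ts/4" "\<eta> \<le> Y ts/2" unfolding \<eta>_def by auto
  have e0: "\<eta> > 0" unfolding \<eta>_def using g1 m ts0 Yts by auto
  have "2*\<eta> < ts * m"
  proof -
    have "2*\<eta> < 4*\<eta>" using e0 by simp
    also have "\<dots> \<le> m*ts" using e1(2) by simp
    finally show ?thesis by (simp add: mult.commute)
  qed
  hence "2*\<eta>/m < ts" using m by (simp add: pos_divide_less_eq)
  hence \<eta>: "\<eta> > 0" "\<eta> < g1" "2*\<eta>/m < ts" "\<eta> < Y ts" using e0 e1 g1 Yts by auto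
  obtain x where x: "F x ts > Y ts - \<eta>" using near \<eta> by blast
  define g where "g s = Y s - F x s" for s
  have gder: "(g has_real_derivative (- 1/(a* s^2) - F' x s)) (at s)" if "s > 0" for s
  proof -
    have "((\<lambda>s. 1/(a* s)) has_real_derivative - 1/(a* s^2)) (at s)"
      using that a by (auto intro!: derivative_eq_intros simp: power2_eq_square field_simps)
    hence "((\<lambda>s. 1/(a * s) + k + \<delta> - F x s) has_real_derivative (- 1/(a * s^2) + 0 + 0 - F' x s)) (at s)"
      by (intro DERIV_diff DERIV_add DERIV_const der[OF that])
    moreover have "g = (\<lambda>s. 1/(a * s) + k + \<delta> - F x s)" unfolding g_def Y_def by (rule ext) simp
    ultimately show ?thesis by simp
  qed
  have gpos: "g s > 0" if "0 < s" "s < ts" for s using before[OF that] unfolding g_def by simp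
  have gts: "g ts < \<eta>" using x unfolding g_def by simp
  have gm: "- 1/(a* s^2) - F' x s \<ge> m" if s: "0 < s" "s < ts" "g s \<le> g1" for s
  proof -
    have gs0: "g s > 0" using gpos s by simp
    have gd: "g s \<le> \<delta>/2" "g s \<le> a*\<delta>^2/(8*(L+1))" using s(3) unfolding g1_def by auto
    define q where "q = 1/(a* s) + k + \<delta>/2"
    have q0: "q \<ge> 0" unfolding q_def using a s k0 \<delta> by simp
    have Fq: "F x s \<ge> q" using gd unfolding g_def Y_def q_def by simp
    have F'le: "F' x s \<le> - a * (F x s)^2 + b + L * (Y s - F x s)"
      by (rule ineq) (use s before Fq q0 in \<open>auto intro: less_imp_le\<close>)
    have "q^2 \<le> (F x s)^2" using Fq q0 by (simp add: power_mono)
    hence aF: "a * q^2 \<le> a * (F x s)^2" using a by simp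
    have "a * q^2 = 1/(a* s^2) + 2*(k+\<delta>/2)/s + a*k^2 + a*k*\<delta> + a*\<delta>^2/4"
      unfolding q_def using a s by (simp add: power2_eq_square field_simps)
    moreover have "2*(k+\<delta>/2)/s \<ge> 0" using k0 \<delta> s by simp
    moreover have "a*k*\<delta> \<ge> 0" using a k0 \<delta> by simp
    ultimately have aq: "a * q^2 \<ge> 1/(a* s^2) + b + a*\<delta>^2/4" using ak by linarith
    have "L * g s \<le> L * (a*\<delta>^2/(8*(L+1)))" using gd(2) L by (rule mult_left_mono)
    also have "\<dots> \<le> a*\<delta>^2/8"
    proof -
      have "L/(L+1) \<le> 1" using L by simp
      hence "(a*\<delta>^2/8) * (L/(L+1)) \<le> (a*\<delta>^2/8) * 1" using a by (intro mult_left_mono) auto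
      thus ?thesis using L by (simp add: field_simps)
    qed
    finally have Lg: "L * g s \<le> a*\<delta>^2/8" .
    have "F' x s \<le> - a * (F x s)^2 + b + L * g s" using F'le unfolding g_def by simp
    hence "- 1/(a* s^2) - F' x s \<ge> - 1/(a* s^2) + a*(F x s)^2 - b - L * g s" by simp
    thus ?thesis using aF aq Lg unfolding m_def by linarith
  qed
  define s1 where "s1 = ts - 2*\<eta>/m"
  have s1: "0 < s1" "s1 < ts" unfolding s1_def using \<eta> m by auto
  have gcont: "continuous_on {p..q} g" if "0 < p" for p q
    using gder that by (intro DERIV_atLeastAtMost_imp_continuous_on) (meson less_le_trans)
  show False
  proof (cases "\<exists>s\<in>{s1..ts}. g s \<ge> g1")
    case True
    then obtain s where s: "s1 \<le> s" "s \<le> ts" "g s \<ge> g1" by auto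
    have c: "continuous_on {s..ts} (\<lambda>r. g1 - g r)" using gcont[of s ts] s(1) s1(1)
      by (intro continuous_intros) auto
    have "g1 - g s \<le> 0" "g1 - g ts > 0" using s(3) gts \<eta> by auto
    then obtain s0 where s0: "s \<le> s0" "s0 < ts" "g1 - g s0 \<le> 0" "\<forall>r. s0 < r \<and> r \<le> ts \<longrightarrow> g1 - g r > 0"
      using last_time[OF s(2) c] by blast
    obtain z where z: "s0 < z" "z < ts" "g ts - g s0 = (ts - s0) * (- 1/(a*z^2) - F' x z)"
      using MVT2[OF s0(2), of g "\<lambda>z. - 1/(a*z^2) - F' x z"] gder s0(1) s(1) s1 by force
    have "- 1/(a*z^2) - F' x z \<ge> m" using gm[of z] z s0 s s1 by auto
    hence "g ts \<ge> g s0" using z m s0 by (smt (verit) mult_nonneg_nonneg)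
    thus False using s0 gts \<eta> by simp
  next
    case False
    obtain z where z: "s1 < z" "z < ts" "g ts - g s1 = (ts - s1) * (- 1/(a*z^2) - F' x z)"
      using MVT2[OF s1(2), of g "\<lambda>z. - 1/(a*z^2) - F' x z"] gder s1 by force
    have "- 1/(a*z^2) - F' x z \<ge> m" using gm[of z] z s1 False by (auto simp: not_le less_imp_le)
    hence "g ts - g s1 \<ge> (ts - s1) * m" using z s1 by (simp add: mult_left_mono)
    also have "(ts - s1) * m = 2*\<eta>" unfolding s1_def using m by simp
    finally have "g ts \<ge> g s1 + 2*\<eta>" by simp
    thus False using gpos[OF s1] gts \<eta> by simp
  qed
qed

lemma abstract_main:
  fixes F F' :: "'v \<Rightarrow> real \<Rightarrow> real"
  assumes der: "\<And>x t. t > 0 \<Longrightarrow> (F x has_real_derivative F' x t) (at t)"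
    and bnd: "\<And>x t. t > 0 \<Longrightarrow> F x t \<le> Bm"
    and ineq: "\<And>x t Z. t > 0 \<Longrightarrow> F x t \<ge> 0 \<Longrightarrow> (\<And>y. F y t \<le> Z) \<Longrightarrow> F x t \<le> Z \<Longrightarrow>
                 F' x t \<le> - a * (F x t)^2 + b + L * (Z - F x t)"
    and a: "a > 0" and b: "b \<ge> 0" and L: "L \<ge> 0" and Bm: "Bm \<ge> 0" and t: "t > 0"
  shows "F x t \<le> 1/(a*t) + sqrt (b/a)"
proof (rule ccontr)
  assume nt: "\<not> F x t \<le> 1/(a*t) + sqrt (b/a)"
  define dd where "dd = (F x t - (1/(a*t) + sqrt (b/a)))/2"
  have d: "dd > 0" using nt unfolding dd_def by simp
  have "\<forall>x' t'. t' > 0 \<longrightarrow> F x' t' < 1/(a*t') + sqrt (b/a) + dd"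
    by (rule abstract_delta[where F=F and F'=F' and Bz=Bm and L=L and a=a and b=b]) (use der bnd ineq a b L Bm d in auto)
  hence "F x t < 1/(a*t) + sqrt (b/a) + dd" using t by blast
  moreover have "\<And>F c::real. F < c + (F-c)/2 \<Longrightarrow> 0 < (F-c)/2 \<Longrightarrow> False" by (simp add: field_simps)
  ultimately show False using d unfolding dd_def by blast
qed



lemma lap_prod_identity:
  assumes "f x \<noteq> 0"
  shows "lap E w mu f x * G x / f x - lap E w mu (\<lambda>y. f y * G y) x / f x
       = (1/mu x) * (\<Sum>y\<in>nbrs E x. w x y * (f y / f x) * (G x - G y))"
proof -
  have e1: "(\<Sum>y\<in>nbrs E x. w x y * (f y - f x)) * G x - (\<Sum>y\<in>nbrs E x. w x y * (f y * G y - f x * G x))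
      = (\<Sum>y\<in>nbrs E x. w x y * f y * (G x - G y))"
    unfolding sum_distrib_right sum_subtractf[symmetric] by (rule sum.cong) (auto simp: algebra_simps)
  have e2: "(\<Sum>y\<in>nbrs E x. w x y * f y * (G x - G y)) / f x = (\<Sum>y\<in>nbrs E x. w x y * (f y / f x) * (G x - G y))"
    unfolding sum_divide_distrib by (rule sum.cong) auto
  have "lap E w mu f x * G x / f x - lap E w mu (\<lambda>y. f y * G y) x / f x
     = (1/mu x) * (((\<Sum>y\<in>nbrs E x. w x y * (f y - f x)) * G x - (\<Sum>y\<in>nbrs E x. w x y * (f y * G y - f x * G x))) / f x)"
    unfolding lap_def by (simp add: algebra_simps diff_divide_distrib)
  also have "\<dots> = (1/mu x) * (\<Sum>y\<in>nbrs E x. w x y * (f y / f x) * (G x - G y))" unfolding e1 e2 ..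
  finally show ?thesis .
qed

theorem mainTheorem8:
  fixes E :: "'v \<Rightarrow> 'v \<Rightarrow> bool" and w :: "'v \<Rightarrow> 'v \<Rightarrow> real" and mu :: "'v \<Rightarrow> real"
    and psi :: "real \<Rightarrow> real" and u :: "'v \<Rightarrow> real \<Rightarrow> real" and n K :: real
  assumes graph: "weighted_graph E w mu"
    and infinite: "infinite (UNIV :: 'v set)"
    and Dmu_fin: "bdd_above (range (\<lambda>x. deg E w x / mu x))"
    and Dw_fin: "bdd_above {deg E w x / w x y | x y. E x y}"
    and n_pos: "n > 0" and K_pos: "K > 0"
    and psi_diff: "\<forall>s>0. psi differentiable (at s)"
    and psi_C1: "continuous_on {0<..} (deriv psi)"
    and psi_concave: "concave_on {0<..} psi"
    and psi_pos: "\<forall>s>0. psi s > 0"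
    and dpsi_pos: "\<forall>s>0. deriv psi s > 0"
    and img: "psi 1 * D_w E w \<in> psi ` {0<..}"
    and CD: "CD_psi E w mu psi n (- K)"
    and heat: "heat_solution E w mu u"
  shows "\<forall>x. \<forall>t>0.
     Gamma_psi E w mu psi (\<lambda>y. u y t) x - deriv psi 1 * deriv (u x) t / u x t
       \<le> n / (2 * t) + sqrt (n * K *
            (D_mu E w mu * (deriv psi 1 * (the_inv_into {0<..} psi (psi 1 * D_w E w) - 1) + psi 1)))"
proof -
  have fin: "\<And>x. finite (nbrs E x)" and wpos: "\<And>x y. y \<in> nbrs E x \<Longrightarrow> w x y > 0"
    and mupos: "\<And>x. mu x > 0" and conn: "\<And>x y. E\<^sup>*\<^sup>* x y"
    using graph unfolding weighted_graph_def nbrs_def by auto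
  have upos: "\<And>x t. t \<ge> 0 \<Longrightarrow> u x t > 0" using heat unfolding heat_solution_def by auto
  have uder: "(u x has_real_derivative lap E w mu (\<lambda>y. u y t) x) (at t)" if "t > 0" for x t
  proof -
    obtain u' where u': "\<forall>t\<ge>0. (u x has_real_derivative u' t) (at t within {0..}) \<and> u' t = lap E w mu (\<lambda>y. u y t) x"
      using heat unfolding heat_solution_def by blast
    have "at t within {0..} = at t" using that by (intro at_within_interior) simp
    moreover have "(u x has_real_derivative u' t) (at t within {0..}) \<and> u' t = lap E w mu (\<lambda>y. u y t) x"
      using u' that by (meson less_imp_le)
    ultimately show ?thesis by metis
  qed
  have dpsi: "(psi has_real_derivative deriv psi s) (at s)" if "s > 0" for s
    using psi_diff that DERIV_deriv_iff_real_differentiable by blast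
  have psi1: "psi 1 > 0" using psi_pos by simp
  have dpsi1: "deriv psi 1 > 0" using dpsi_pos by simp
  have psimono: "psi p < psi q" if "0 < p" "p < q" for p q
  proof (rule DERIV_pos_imp_increasing[OF that(2)])
    fix x assume "p \<le> x" "x \<le> q"
    hence "x > 0" using that by simp
    thus "\<exists>y. (psi has_real_derivative y) (at x) \<and> 0 < y" using dpsi dpsi_pos by blast
  qed
  have psimono_le: "p \<le> q" if "0 < p" "0 < q" "psi p \<le> psi q" for p q
    using psimono[of q p] that by (meson not_le)
  have inj: "inj_on psi {0<..}"
    by (rule inj_onI) (metis greaterThan_iff linorder_neq_iff psimono order_less_irrefl)
  define DW where "DW = D_w E w"
  define dD where "dD = D_mu E w mu"
  define R where "R = the_inv_into {0<..} psi (psi 1 * DW)"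
  have R0: "R > 0" unfolding R_def DW_def using the_inv_into_into[OF inj img] by auto
  have psiR: "psi R = psi 1 * DW" unfolding R_def DW_def using f_the_inv_into_f[OF inj img] by simp
  have dmu: "deg E w x / mu x \<le> dD" for x unfolding dD_def D_mu_def by (rule cSup_upper[OF _ Dmu_fin]) simp
  have deg_nonneg: "deg E w x \<ge> 0" for x unfolding deg_def by (rule sum_nonneg) (meson wpos less_imp_le)
  have dD0: "dD \<ge> 0" using dmu[of undefined] deg_nonneg[of undefined] mupos[of undefined]
    by (meson divide_nonneg_pos order_trans)
  have dw: "deg E w x / w x y \<le> DW" if "y \<in> nbrs E x" for x y
    unfolding DW_def D_w_def by (rule cSup_upper[OF _ Dw_fin]) (use that in \<open>auto simp: nbrs_def\<close>)
  have deg_ge: "w x y \<le> deg E w x" if "y \<in> nbrs E x" for x y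
    unfolding deg_def by (rule member_le_sum) (use that fin wpos in \<open>auto intro: less_imp_le\<close>)
  have DW1: "DW \<ge> 1"
  proof -
    have "\<exists>x y::'v. x \<noteq> y"
    proof (rule ccontr)
      assume "\<not> ?thesis"
      hence "UNIV = {undefined::'v}" by auto
      thus False using infinite by (metis finite.emptyI finite_insert)
    qed
    then obtain x y :: 'v where xy: "x \<noteq> y" by blast
    obtain z where "E x z" using conn[of x y] xy by (metis converse_rtranclpE)
    hence z: "z \<in> nbrs E x" unfolding nbrs_def by simp
    have "1 \<le> deg E w x / w x z" using deg_ge[OF z] wpos[OF z] by simp
    also have "\<dots> \<le> DW" by (rule dw[OF z])
    finally show ?thesis .
  qed
  have R1: "R \<ge> 1"
  proof (rule psimono_le[OF _ R0])
    have "psi 1 > 0" using psi_pos by simp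
    hence "psi 1 * 1 \<le> psi 1 * DW" using DW1 by (intro mult_left_mono) auto
    thus "psi 1 \<le> psi R" using psiR by simp
  qed simp
  define P where "P = deriv psi 1 * (R - 1) + psi 1"
  have P0: "P \<ge> 0" unfolding P_def using R1 dpsi_pos psi_pos by (simp add: add_nonneg_nonneg less_imp_le)
  define C where "C = dD * P"
  have C0: "C \<ge> 0" unfolding C_def using dD0 P0 by simp
  define Fh where "Fh x t = (1/mu x) * (\<Sum>y\<in>nbrs E x. w x y * (psi 1 - psi (u y t / u x t)))" for x t
  define F' where "F' x t = - Omega_psi E w mu psi (\<lambda>y. u y t) x" for x t
  define S where "S x t = (1/mu x) * (\<Sum>y\<in>nbrs E x. w x y * (u y t / u x t) * (Fh y t - Fh x t))" for x t
  have lpsi: "lap_psi E w mu psi (\<lambda>y. u y t) x = - Fh x t" if "t \<ge> 0" for x t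
  proof -
    have ux: "u x t > 0" using upos that by simp
    have "(\<Sum>y\<in>nbrs E x. w x y * (psi (u y t / u x t) - psi (u x t / u x t)))
        = - (\<Sum>y\<in>nbrs E x. w x y * (psi 1 - psi (u y t / u x t)))"
      unfolding sum_negf[symmetric] using ux by (intro sum.cong) (auto simp: algebra_simps)
    thus ?thesis unfolding lap_psi_def lap_def Fh_def by simp
  qed
  have Fder: "(Fh x has_real_derivative F' x t) (at t)" if t: "t > 0" for x t
  proof -
    define Lp where "Lp y = lap E w mu (\<lambda>z. u z t) y" for y
    have ux: "u x t > 0" using upos t by simp
    have trm: "((\<lambda>s. w x y * (psi 1 - psi (u y s / u x s))) has_real_derivative
        w x y * (0 - deriv psi (u y t / u x t) * ((Lp y * u x t - u y t * Lp x) / (u x t * u x t)))) (at t)"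
      for y
    proof -
      have q: "((\<lambda>s. u y s / u x s) has_real_derivative (Lp y * u x t - u y t * Lp x) / (u x t * u x t)) (at t)"
        unfolding Lp_def by (rule DERIV_divide[OF uder[OF t] uder[OF t]]) (use ux in simp)
      have p: "(psi has_real_derivative deriv psi (u y t / u x t)) (at (u y t / u x t))"
        using dpsi upos t by simp
      show ?thesis by (intro DERIV_cmult DERIV_diff DERIV_const DERIV_chain2[OF p q])
    qed
    have d: "((\<lambda>s. (1/mu x) * (\<Sum>y\<in>nbrs E x. w x y * (psi 1 - psi (u y s / u x s)))) has_real_derivative
       (1/mu x) * (\<Sum>y\<in>nbrs E x. w x y * (0 - deriv psi (u y t / u x t) * ((Lp y * u x t - u y t * Lp x) / (u x t * u x t))))) (at t)"
      by (intro DERIV_cmult DERIV_sum trm)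
    have fe: "Fh x = (\<lambda>s. (1/mu x) * (\<Sum>y\<in>nbrs E x. w x y * (psi 1 - psi (u y s / u x s))))"
      unfolding Fh_def by (rule ext) simp
    have "(\<Sum>y\<in>nbrs E x. w x y * (0 - deriv psi (u y t / u x t) * ((Lp y * u x t - u y t * Lp x) / (u x t * u x t))))
      = - (\<Sum>y\<in>nbrs E x. w x y * (deriv psi (u y t / u x t) * (u y t / u x t) * (Lp y / u y t - Lp x / u x t)
            - deriv psi (u x t / u x t) * (u x t / u x t) * (Lp x / u x t - Lp x / u x t)))"
      unfolding sum_negf[symmetric]
    proof (rule sum.cong)
      fix y assume "y \<in> nbrs E x"
      have uy: "u y t > 0" using upos t by simp
      show "w x y * (0 - deriv psi (u y t / u x t) * ((Lp y * u x t - u y t * Lp x) / (u x t * u x t)))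
        = - (w x y * (deriv psi (u y t / u x t) * (u y t / u x t) * (Lp y / u y t - Lp x / u x t)
            - deriv psi (u x t / u x t) * (u x t / u x t) * (Lp x / u x t - Lp x / u x t)))"
        using ux uy by (simp add: field_simps)
    qed simp
    hence "(1/mu x) * (\<Sum>y\<in>nbrs E x. w x y * (0 - deriv psi (u y t / u x t) * ((Lp y * u x t - u y t * Lp x) / (u x t * u x t))))
       = F' x t"
      unfolding F'_def Omega_psi_def lap_def Lp_def by simp
    thus ?thesis using d fe by simp
  qed
  have Fbnd: "Fh x t \<le> dD * psi 1" if "t \<ge> 0" for x t
  proof -
    have "(\<Sum>y\<in>nbrs E x. w x y * (psi 1 - psi (u y t / u x t))) \<le> (\<Sum>y\<in>nbrs E x. w x y * psi 1)"
    proof (rule sum_mono)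
      fix y assume y: "y \<in> nbrs E x"
      have "psi (u y t / u x t) > 0" using psi_pos upos that by simp
      thus "w x y * (psi 1 - psi (u y t / u x t)) \<le> w x y * psi 1" using wpos[OF y] by simp
    qed
    also have "\<dots> = deg E w x * psi 1" unfolding deg_def sum_distrib_right ..
    finally have "Fh x t \<le> (1/mu x) * (deg E w x * psi 1)" unfolding Fh_def using mupos[of x]
      by (intro mult_left_mono) auto
    also have "\<dots> = (deg E w x / mu x) * psi 1" by simp
    also have "\<dots> \<le> dD * psi 1" using dmu[of x] psi1 by (intro mult_right_mono) auto
    finally show ?thesis .
  qed
  have rbnd: "u y t / u x t \<le> R" if "t \<ge> 0" "Fh x t \<ge> 0" "y \<in> nbrs E x" for x y t
  proof -
    have "0 \<le> (\<Sum>y\<in>nbrs E x. w x y * (psi 1 - psi (u y t / u x t)))"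
      using that(2) mupos[of x] unfolding Fh_def by (simp add: zero_le_divide_iff)
    also have "\<dots> = deg E w x * psi 1 - (\<Sum>y\<in>nbrs E x. w x y * psi (u y t / u x t))"
      unfolding deg_def sum_distrib_right sum_subtractf[symmetric] by (rule sum.cong) (auto simp: algebra_simps)
    finally have s1: "(\<Sum>y\<in>nbrs E x. w x y * psi (u y t / u x t)) \<le> deg E w x * psi 1" by simp
    have "w x y * psi (u y t / u x t) \<le> (\<Sum>y\<in>nbrs E x. w x y * psi (u y t / u x t))"
    proof (rule member_le_sum[OF that(3)])
      fix z assume "z \<in> nbrs E x - {y}"
      hence "w x z > 0" using wpos by auto
      moreover have "psi (u z t / u x t) > 0" using psi_pos upos that by simp
      ultimately show "0 \<le> w x z * psi (u z t / u x t)" by simp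
    qed (rule fin)
    hence "w x y * psi (u y t / u x t) \<le> deg E w x * psi 1" using s1 by simp
    hence "psi (u y t / u x t) \<le> psi 1 * (deg E w x / w x y)" using wpos[OF that(3)]
      by (simp add: field_simps mult.commute)
    also have "\<dots> \<le> psi 1 * DW" using dw[OF that(3)] psi1 by (intro mult_left_mono) auto
    also have "\<dots> = psi R" using psiR by simp
    finally show ?thesis using psimono_le R0 upos that by simp
  qed
  have Gbnd: "Gamma_psi E w mu psi (\<lambda>y. u y t) x \<le> C" if "t \<ge> 0" "Fh x t \<ge> 0" for x t
  proof -
    have ux: "u x t > 0" using upos that by simp
    have "(\<Sum>y\<in>nbrs E x. w x y * (psibar psi (u y t / u x t) - psibar psi (u x t / u x t)))
        \<le> (\<Sum>y\<in>nbrs E x. w x y * P)"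
    proof (rule sum_mono)
      fix y assume y: "y \<in> nbrs E x"
      have r: "u y t / u x t \<le> R" by (rule rbnd[OF that y])
      have "psi (u y t / u x t) > 0" using psi_pos upos that by simp
      moreover have "deriv psi 1 * (u y t / u x t - 1) \<le> deriv psi 1 * (R - 1)"
        using r dpsi1 by (intro mult_left_mono) auto
      ultimately have "psibar psi (u y t / u x t) \<le> P" unfolding psibar_def P_def by simp
      moreover have "psibar psi (u x t / u x t) = 0" using ux unfolding psibar_def by simp
      ultimately show "w x y * (psibar psi (u y t / u x t) - psibar psi (u x t / u x t)) \<le> w x y * P"
        using wpos[OF y] by simp
    qed
    also have "\<dots> = deg E w x * P" unfolding deg_def sum_distrib_right ..
    finally have "Gamma_psi E w mu psi (\<lambda>y. u y t) x \<le> (1/mu x) * (deg E w x * P)"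
      unfolding Gamma_psi_def lap_psi_def lap_def using mupos[of x] by (intro mult_left_mono) auto
    also have "\<dots> = (deg E w x / mu x) * P" by simp
    also have "\<dots> \<le> dD * P" using dmu[of x] P0 by (intro mult_right_mono) auto
    finally show ?thesis unfolding C_def .
  qed
  have Sbnd: "S x t \<le> (dD * R) * (Z - Fh x t)" if "t \<ge> 0" "Fh x t \<ge> 0" "\<And>y. Fh y t \<le> Z" "Fh x t \<le> Z" for x t Z
  proof -
    have ux: "u x t > 0" using upos that by simp
    have "(\<Sum>y\<in>nbrs E x. w x y * (u y t / u x t) * (Fh y t - Fh x t))
        \<le> (\<Sum>y\<in>nbrs E x. w x y * (R * (Z - Fh x t)))"
    proof (rule sum_mono)
      fix y assume y: "y \<in> nbrs E x"
      have r: "u y t / u x t \<le> R" by (rule rbnd[OF that(1,2) y])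
      have r0: "u y t / u x t > 0" using upos that by simp
      have "(u y t / u x t) * (Fh y t - Fh x t) \<le> (u y t / u x t) * (Z - Fh x t)"
        using r0 that(3)[of y] by (intro mult_left_mono) auto
      also have "\<dots> \<le> R * (Z - Fh x t)" using r that(4) by (intro mult_right_mono) auto
      finally have fin: "(u y t / u x t) * (Fh y t - Fh x t) \<le> R * (Z - Fh x t)" .
      have "w x y * ((u y t / u x t) * (Fh y t - Fh x t)) \<le> w x y * (R * (Z - Fh x t))"
        by (rule mult_left_mono[OF fin]) (use wpos[OF y] in simp)
      thus "w x y * (u y t / u x t) * (Fh y t - Fh x t) \<le> w x y * (R * (Z - Fh x t))"
        by (simp only: mult.assoc)
    qed
    also have "\<dots> = deg E w x * (R * (Z - Fh x t))" unfolding deg_def sum_distrib_right ..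
    finally have "S x t \<le> (1/mu x) * (deg E w x * (R * (Z - Fh x t)))"
      unfolding S_def using mupos[of x] by (intro mult_left_mono) auto
    also have "\<dots> = (deg E w x / mu x) * (R * (Z - Fh x t))" by simp
    also have "\<dots> \<le> dD * (R * (Z - Fh x t))" using dmu[of x] R0 that(4) by (intro mult_right_mono) auto
    finally show ?thesis by (simp add: mult.assoc)
  qed
  have G2: "2 * Gamma2_psi E w mu psi (\<lambda>y. u y t) x = Omega_psi E w mu psi (\<lambda>y. u y t) x + S x t" if "t \<ge> 0" for x t
  proof -
    have ux: "u x t > 0" using upos that by simp
    have id: "lap E w mu (\<lambda>y. u y t) x * lap_psi E w mu psi (\<lambda>y. u y t) x / u x t
       - lap E w mu (\<lambda>y. u y t * lap_psi E w mu psi (\<lambda>y. u y t) y) x / u x t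
       = (1/mu x) * (\<Sum>y\<in>nbrs E x. w x y * (u y t / u x t) * (lap_psi E w mu psi (\<lambda>y. u y t) x - lap_psi E w mu psi (\<lambda>y. u y t) y))"
      using lap_prod_identity[where f="\<lambda>y. u y t" and x=x and G="\<lambda>z. lap_psi E w mu psi (\<lambda>y. u y t) z"] ux by simp
    also have "\<dots> = S x t" unfolding S_def using lpsi that by simp
    finally show ?thesis unfolding Gamma2_psi_def by simp
  qed
  have ineq: "F' x t \<le> - (2/n) * (Fh x t)^2 + 2*K*C + (dD * R) * (Z - Fh x t)"
    if "t > 0" "Fh x t \<ge> 0" "\<And>y. Fh y t \<le> Z" "Fh x t \<le> Z" for x t Z
  proof -
    have cd: "Gamma2_psi E w mu psi (\<lambda>y. u y t) x \<ge> (1/n) * (Fh x t)^2 + (-K) * Gamma_psi E w mu psi (\<lambda>y. u y t) x"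
    proof -
      have "\<forall>y. u y t > 0" using upos that(1) by (simp add: less_imp_le)
      hence "Gamma2_psi E w mu psi (\<lambda>y. u y t) x \<ge> (1/n) * (lap_psi E w mu psi (\<lambda>y. u y t) x)\<^sup>2 + (-K) * Gamma_psi E w mu psi (\<lambda>y. u y t) x"
        using CD[unfolded CD_psi_def, rule_format, of "\<lambda>y. u y t" x] by simp
      thus ?thesis using lpsi[of t x] that(1) by simp
    qed
    have "F' x t = S x t - 2 * Gamma2_psi E w mu psi (\<lambda>y. u y t) x"
      unfolding F'_def using G2[of t x] that(1) by simp
    also have "\<dots> \<le> S x t - (2/n) * (Fh x t)^2 + 2 * K * Gamma_psi E w mu psi (\<lambda>y. u y t) x"
      using cd by simp
    also have "\<dots> \<le> S x t - (2/n) * (Fh x t)^2 + 2 * K * C"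
      using Gbnd[of t x] that K_pos by simp
    also have "\<dots> \<le> (dD * R) * (Z - Fh x t) - (2/n) * (Fh x t)^2 + 2 * K * C"
      using Sbnd[of t x Z] that by simp
    finally show ?thesis by simp
  qed
  show ?thesis
  proof (intro allI impI)
    fix x and t :: real assume t: "t > 0"
    have main: "Fh x t \<le> 1/((2/n)*t) + sqrt ((2*K*C)/(2/n))"
      by (rule abstract_main[where F=Fh and F'=F' and Bm="dD * psi 1" and a="2/n" and b="2*K*C" and L="dD*R"])
         (use Fder Fbnd ineq n_pos K_pos C0 dD0 R0 psi_pos t in \<open>auto simp: less_imp_le\<close>)
    have e1: "1/((2/n)*t) = n/(2*t)" by simp
    have e2: "(2*K*C)/(2/n) = n*K*C" using n_pos by (simp add: field_simps)
    have e3: "n*K*C = n * K * (D_mu E w mu * (deriv psi 1 * (the_inv_into {0<..} psi (psi 1 * D_w E w) - 1) + psi 1))"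
      unfolding C_def P_def R_def DW_def dD_def by simp
    have LHS: "Gamma_psi E w mu psi (\<lambda>y. u y t) x - deriv psi 1 * deriv (u x) t / u x t = Fh x t"
    proof -
      have ux: "u x t > 0" using upos t by simp
      have dv: "deriv (u x) t = lap E w mu (\<lambda>y. u y t) x" by (rule DERIV_imp_deriv[OF uder[OF t]])
      have "(\<Sum>y\<in>nbrs E x. w x y * (psibar psi (u y t / u x t) - psibar psi (u x t / u x t)))
            - deriv psi 1 * (\<Sum>y\<in>nbrs E x. w x y * (u y t - u x t)) / u x t
          = (\<Sum>y\<in>nbrs E x. w x y * (psi 1 - psi (u y t / u x t)))"
        unfolding sum_distrib_left sum_divide_distrib sum_subtractf[symmetric]
        by (rule sum.cong) (use ux in \<open>auto simp: psibar_def field_simps\<close>)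
      thus ?thesis unfolding Gamma_psi_def lap_psi_def Fh_def dv lap_def
        by (simp add: algebra_simps diff_divide_distrib)
    qed
    show "Gamma_psi E w mu psi (\<lambda>y. u y t) x - deriv psi 1 * deriv (u x) t / u x t
       \<le> n / (2 * t) + sqrt (n * K *
            (D_mu E w mu * (deriv psi 1 * (the_inv_into {0<..} psi (psi 1 * D_w E w) - 1) + psi 1)))"
      using main unfolding LHS e1 e2 e3 .
  qed
qed


end
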